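(* Let $A$ be a DFA over a finite alphabet $\Sigma$ and let $S=s_1,\ldots,s_l$ be any non-empty sequence of strings $s_i\in\Sigma^*$. Any execution of prefix-free IDS on $S$ (with teacher $A$) terminates, with the program variable $k$ having value $l$.
   Context: Let $A=\langle\Sigma,Q,F,q_0,\delta\rangle$ be a DFA with language $L(A)$; $\lambda$ is the empty string; membership queries to $A$ are answered correctly. Let $d_0$ be a fresh symbol not in $\Sigma^*$; $f(d_0,b)=d_0$, $f(\alpha,b)=\alpha b$ for $\alpha\in\Sigma^*$; $U\oplus V=(U-V)\cup(V-U)$. Refinement procedure (w.r.t. $P'_k$, $T_k$): while there exist $\alpha,\beta\in P'_k$, $b\in\Sigma$ with $E_i(\alpha)=E_i(\beta)$ but $E_i(f(\alpha,b))\neq E_i(f(\beta,b))$: choose (nondeterministically) such $\alpha,\beta,b$ and $\gamma\in E_i(f(\alpha,b))\oplus E_i(f(\beta,b))$, set $v_{i+1}=b\gamma$, increase $i$, and for each $\alpha'\in T_k$ set $E_i(\alpha')=E_{i-1}(\alpha')\cup\{v_i\}$ if $\alpha'v_i\in L(A)$, else $E_i(\alpha')=E_{i-1}(\alpha')$; always $E_i(d_0)=\emptyset$. Construction procedure: states $E_i(\alpha)$, $\alpha\in T_k$; initial state $E_i(\lambda)$; accepting states those containing $\lambda$; for $\alpha\in P'_k$: if $E_i(\alpha)=\emptyset$ add self-loops for all $b$, else $\delta(E_i(\alpha),b)=E_i(f(\alpha,b))$; for $\beta\in T_k-P'_k$ with $E_i(\beta)\neq E_i(\alpha)$ for all $\alpha\in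 P'_k$ and $E_i(\beta)\ne\emptyset$, $\delta(E_i(\beta),b)=\emptyset$ for all $b$. Prefix-free IDS on $S$: initialize $i=k=t=0$, $v_0=\lambda$, $P_0=\{\lambda\}$, $P'_0=P_0\cup\{d_0\}$, $T_0=\{\lambda\}\cup\Sigma$, $E_0(\alpha)=\{\lambda\}$ if $\alpha\in L(A)$ else $\emptyset$ ($\alpha\in T_0$); refine; construct $M_0$. While $S$ is non-empty: read the next string $\alpha$ (removing it from $S$); increase $k,t$ by one; $P_k=P_{k-1}\cup\{\alpha\}$, $P'_k=P_k\cup\{d_0\}$, $T_k=T_{k-1}\cup\{\alpha\}\cup\{\alpha b:b\in\Sigma\}$; for $\beta\in T_k-T_{k-1}$ set $E_i(\beta)=\{v_j:0\le j\le i,\beta v_j\in L(A)\}$; refine; set $M_t=M_{t-1}$ if $M_{t-1}$ accepts $\alpha$ iff $\alpha\in L(A)$, else construct $M_t$. *)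

theory Defs
  imports Main
begin

definition dfa :: "'a set \<Rightarrow> 'q set \<Rightarrow> 'q set \<Rightarrow> 'q \<Rightarrow> ('q \<Rightarrow> 'a \<Rightarrow> 'q) \<Rightarrow> bool" where
  "dfa \<Sigma> Q F q0 \<delta> \<longleftrightarrow> finite \<Sigma> \<and> finite Q \<and> F \<subseteq> Q \<and> q0 \<in> Q \<and>
     (\<forall>q\<in>Q. \<forall>a\<in>\<Sigma>. \<delta> q a \<in> Q)"

definition dfa_lang :: "'a set \<Rightarrow> 'q set \<Rightarrow> 'q \<Rightarrow> ('q \<Rightarrow> 'a \<Rightarrow> 'q) \<Rightarrow> 'a list set" where
  "dfa_lang \<Sigma> F q0 \<delta> = {w. set w \<subseteq> \<Sigma> \<and> foldl \<delta> q0 w \<in> F}"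

text \<open>Strings are lists; the fresh symbol d0 is None, a string alpha is Some alpha.\<close>

fun fx :: "'a list option \<Rightarrow> 'a \<Rightarrow> 'a list option" where
  "fx None b = None"
| "fx (Some \<alpha>) b = Some (\<alpha> @ [b])"

definition symdiff :: "'b set \<Rightarrow> 'b set \<Rightarrow> 'b set" where
  "symdiff U V = (U - V) \<union> (V - U)"

text \<open>Hypothesis automata produced by the construction procedure: states are sets of
  experiments; transitions given as a relation (at most one successor in practice,
  none meaning the automaton rejects).\<close>
record 'a hyp =
  hstates :: "'a list set set"
  hinit :: "'a list set"
  hacc :: "'a list set set"
  htrans :: "('a list set \<times> 'a \<times> 'a list set) set"

fun hreach :: "'a hyp \<Rightarrow> 'a list set \<Rightarrow> 'a list \<Rightarrow> 'a list set set" where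
  "hreach M q [] = {q}"
| "hreach M q (b # w) = \<Union> {hreach M q' w | q'. (q, b, q') \<in> htrans M}"

definition haccepts :: "'a hyp \<Rightarrow> 'a list \<Rightarrow> bool" where
  "haccepts M w \<longleftrightarrow> (\<exists>q\<in>hreach M (hinit M) w. q \<in> hacc M)"

definition hyp_empty :: "'a hyp" where
  "hyp_empty = \<lparr>hstates = {}, hinit = {}, hacc = {}, htrans = {}\<rparr>"

datatype 'a phase = RefineInit | RefineAfter "'a list" | Loop

text \<open>Program state. vs = [v_0, ..., v_i]; P = P_k (strings); P'_k = Some ` P \<union> {None};
  T = T_k (strings); E x = E_i(x); M = current hypothesis M_t; rest = unread part of S;
  phase records whether we are inside the initial refinement, inside the refinement
  after reading a string alpha, or at the head of the main while loop.\<close>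
record 'a ids_state =
  phase :: "'a phase"
  rest :: "'a list list"
  ii :: nat
  kk :: nat
  tt :: nat
  vs :: "'a list list"
  PP :: "'a list set"
  TT :: "'a list set"
  EE :: "'a list option \<Rightarrow> 'a list set"
  MM :: "'a hyp"

definition Pp :: "('a, 'b) ids_state_scheme \<Rightarrow> 'a list option set" where
  "Pp c = Some ` PP c \<union> {None}"

definition can_refine :: "'a set \<Rightarrow> 'a ids_state \<Rightarrow> bool" where
  "can_refine \<Sigma> c \<longleftrightarrow> (\<exists>\<alpha>\<in>Pp c. \<exists>\<beta>\<in>Pp c. \<exists>b\<in>\<Sigma>.
      EE c \<alpha> = EE c \<beta> \<and> EE c (fx \<alpha> b) \<noteq> EE c (fx \<beta> b))"

definition refine_add :: "'a list set \<Rightarrow> 'a ids_state \<Rightarrow> 'a list \<Rightarrow> 'a ids_state" where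
  "refine_add L c v = c\<lparr> ii := Suc (ii c), vs := vs c @ [v],
     EE := (\<lambda>x. case x of None \<Rightarrow> {}
                | Some a \<Rightarrow> (if a \<in> TT c \<and> a @ v \<in> L then EE c (Some a) \<union> {v}
                             else EE c (Some a))) \<rparr>"

definition construct :: "'a set \<Rightarrow> 'a ids_state \<Rightarrow> 'a hyp" where
  "construct \<Sigma> c = (let E = EE c; Sts = E ` Some ` TT c in
     \<lparr> hstates = Sts,
       hinit = E (Some []),
       hacc = {X \<in> Sts. [] \<in> X},
       htrans =
         {(E \<alpha>, b, E (fx \<alpha> b)) | \<alpha> b. \<alpha> \<in> Pp c \<and> E \<alpha> \<noteq> {} \<and> b \<in> \<Sigma>}
       \<union> {(E \<alpha>, b, E \<alpha>) | \<alpha> b. \<alpha> \<in> Pp c \<and> E \<alpha> = {} \<and> b \<in> \<Sigma>}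
       \<union> {(E (Some \<beta>), b, {}) | \<beta> b. \<beta> \<in> TT c - PP c \<and>
              (\<forall>\<alpha>\<in>Pp c. E (Some \<beta>) \<noteq> E \<alpha>) \<and> E (Some \<beta>) \<noteq> {} \<and> b \<in> \<Sigma>} \<rparr>)"

definition read_string :: "'a set \<Rightarrow> 'a list set \<Rightarrow> 'a ids_state \<Rightarrow> 'a list \<Rightarrow> 'a list list \<Rightarrow> 'a ids_state" where
  "read_string \<Sigma> L c \<alpha> S' = (let T' = TT c \<union> {\<alpha>} \<union> {\<alpha> @ [b] | b. b \<in> \<Sigma>} in
     c\<lparr> phase := RefineAfter \<alpha>, rest := S', kk := Suc (kk c), tt := Suc (tt c),
        PP := insert \<alpha> (PP c), TT := T',
        EE := (\<lambda>x. case x of None \<Rightarrow> {}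
                 | Some \<beta> \<Rightarrow> (if \<beta> \<in> T' - TT c
                              then {vs c ! j | j. j \<le> ii c \<and> \<beta> @ vs c ! j \<in> L}
                              else EE c (Some \<beta>))) \<rparr>)"

definition ids_init :: "'a set \<Rightarrow> 'a list set \<Rightarrow> 'a list list \<Rightarrow> 'a ids_state" where
  "ids_init \<Sigma> L S = (let T0 = {[]} \<union> {[b] | b. b \<in> \<Sigma>} in
     \<lparr> phase = RefineInit, rest = S, ii = 0, kk = 0, tt = 0, vs = [[]],
       PP = {[]}, TT = T0,
       EE = (\<lambda>x. case x of None \<Rightarrow> {}
               | Some a \<Rightarrow> (if a \<in> T0 \<and> a \<in> L then {[]} else {})),
       MM = hyp_empty \<rparr>)"

inductive ids_step :: "'a set \<Rightarrow> 'a list set \<Rightarrow> 'a ids_state \<Rightarrow> 'a ids_state \<Rightarrow> bool"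
  for \<Sigma> :: "'a set" and L :: "'a list set" where
  refine: "\<lbrakk> phase c \<noteq> Loop; \<alpha> \<in> Pp c; \<beta> \<in> Pp c; b \<in> \<Sigma>;
             EE c \<alpha> = EE c \<beta>; EE c (fx \<alpha> b) \<noteq> EE c (fx \<beta> b);
             \<gamma> \<in> symdiff (EE c (fx \<alpha> b)) (EE c (fx \<beta> b)) \<rbrakk>
           \<Longrightarrow> ids_step \<Sigma> L c (refine_add L c (b # \<gamma>))"
| finish_init: "\<lbrakk> phase c = RefineInit; \<not> can_refine \<Sigma> c \<rbrakk>
           \<Longrightarrow> ids_step \<Sigma> L c (c\<lparr> phase := Loop, MM := construct \<Sigma> c \<rparr>)"
| finish_after: "\<lbrakk> phase c = RefineAfter \<alpha>; \<not> can_refine \<Sigma> c \<rbrakk>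
           \<Longrightarrow> ids_step \<Sigma> L c (c\<lparr> phase := Loop,
                 MM := (if (haccepts (MM c) \<alpha> \<longleftrightarrow> \<alpha> \<in> L) then MM c else construct \<Sigma> c) \<rparr>)"
| read: "\<lbrakk> phase c = Loop; rest c = \<alpha> # S' \<rbrakk>
           \<Longrightarrow> ids_step \<Sigma> L c (read_string \<Sigma> L c \<alpha> S')"

end

theory Submission
  imports Defs
begin

definition inv :: "'a set \<Rightarrow> 'a list set \<Rightarrow> 'a ids_state \<Rightarrow> bool" where
"inv \<Sigma> L c \<longleftrightarrow> PP c \<subseteq> TT c \<and> (\<forall>a\<in>PP c. \<forall>b\<in>\<Sigma>. a@[b] \<in> TT c) \<and> EE c None = {}
   \<and> (\<forall>x. EE c (Some x) = (if x \<in> TT c then {v\<in>set (vs c). x@v \<in> L} else {}))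
   \<and> length (vs c) = Suc (ii c)"

lemma nth_set_eq: "length ws = Suc i \<Longrightarrow> {ws!j |j. j \<le> i \<and> P (ws!j)} = {v\<in>set ws. P v}"
  by (auto simp: in_set_conv_nth less_Suc_eq_le)

lemma inv_init: "inv \<Sigma> L (ids_init \<Sigma> L S)"
  unfolding inv_def ids_init_def by auto

lemma inv_step:
  assumes "inv \<Sigma> L c" "ids_step \<Sigma> L c c'"
  shows "inv \<Sigma> L c'"
  using assms(2)
proof cases
  case (refine \<alpha> \<beta> b \<gamma>)
  then show ?thesis using assms(1) unfolding inv_def refine_add_def
    by (auto split: option.splits)
next
  case (read \<alpha> S')
  have eq: "\<And>\<beta>. {vs c ! j |j. j \<le> ii c \<and> \<beta> @ vs c ! j \<in> L} = {v\<in>set (vs c). \<beta> @ v \<in> L}"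
    using assms(1) nth_set_eq[of "vs c" "ii c"] by (simp add: inv_def)
  define T' where "T' = TT c \<union> {\<alpha>} \<union> {\<alpha> @ [b] | b. b \<in> \<Sigma>}"
  have f: "PP c' = insert \<alpha> (PP c)" "TT c' = T'" "vs c' = vs c" "ii c' = ii c"
    "EE c' None = {}"
    using read by (simp_all add: read_string_def Let_def T'_def)
  have f6: "EE c' (Some x) = (if x \<in> T' - TT c then {vs c ! j |j. j \<le> ii c \<and> x @ vs c ! j \<in> L} else EE c (Some x))" for x
    unfolding read(1) read_string_def Let_def T'_def by simp
  note f = f f6[unfolded eq]
  have I: "PP c \<subseteq> TT c" "\<forall>a\<in>PP c. \<forall>b\<in>\<Sigma>. a@[b] \<in> TT c"
     "\<And>x. EE c (Some x) = (if x \<in> TT c then {v\<in>set (vs c). x@v \<in> L} else {})"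
     "length (vs c) = Suc (ii c)"
    using assms(1) by (auto simp: inv_def)
  have "TT c \<subseteq> T'" by (auto simp: T'_def)
  moreover have "\<forall>a\<in>PP c'. \<forall>b\<in>\<Sigma>. a@[b] \<in> TT c'"
    using I(2) f(1,2) by (auto simp: T'_def)
  moreover have "\<forall>x. EE c' (Some x) = (if x \<in> TT c' then {v\<in>set (vs c'). x@v \<in> L} else {})"
    using I(3) f(2,3,6) \<open>TT c \<subseteq> T'\<close> by auto
  ultimately show ?thesis using f I(1,4) unfolding inv_def by (auto simp: T'_def)
qed (use assms(1) in \<open>auto simp: inv_def\<close>)

lemma foldl_Q: "dfa \<Sigma> Q F q0 \<delta> \<Longrightarrow> q \<in> Q \<Longrightarrow> set w \<subseteq> \<Sigma> \<Longrightarrow> foldl \<delta> q w \<in> Q"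
  by (induction w arbitrary: q) (auto simp: dfa_def)

definition cls :: "'a ids_state \<Rightarrow> 'a list set set" where
  "cls c = EE c ` Pp c"

lemma finite_Pp: "finite (PP c) \<Longrightarrow> finite (Pp c)"
  by (simp add: Pp_def)

lemma cls_bound:
  assumes d: "dfa \<Sigma> Q F q0 \<delta>" and i: "inv \<Sigma> (dfa_lang \<Sigma> F q0 \<delta>) c"
  shows "finite (cls c) \<and> card (cls c) \<le> Suc (card Q)"
proof -
  define g where "g q = {v\<in>set (vs c). set v \<subseteq> \<Sigma> \<and> foldl \<delta> q v \<in> F}" for q
  have fQ: "finite Q" using d by (simp add: dfa_def)
  have sub: "cls c \<subseteq> insert {} (g ` Q)"
  proof
    fix X assume "X \<in> cls c"
    then obtain x where x: "x \<in> Pp c" "X = EE c x" by (auto simp: cls_def)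
    show "X \<in> insert {} (g ` Q)"
    proof (cases x)
      case None then show ?thesis using i x by (simp add: inv_def)
    next
      case (Some a)
      show ?thesis
      proof (cases "a \<in> TT c \<and> set a \<subseteq> \<Sigma>")
        case True
        have "foldl \<delta> q0 a \<in> Q" using foldl_Q[OF d] d True by (auto simp: dfa_def)
        moreover have "X = g (foldl \<delta> q0 a)"
          using i x Some True by (auto simp: inv_def g_def dfa_lang_def)
        ultimately show ?thesis by blast
      next
        case False
        then have "X = {}" using i x Some by (auto simp: inv_def dfa_lang_def)
        then show ?thesis by simp
      qed
    qed
  qed
  have "finite (insert {} (g ` Q))" using fQ by simp
  moreover have "card (insert {} (g ` Q)) \<le> Suc (card Q)"
  proof -
    have "card (insert {} (g ` Q)) \<le> Suc (card (g ` Q))"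
      using fQ by (simp add: card_insert_if)
    also have "\<dots> \<le> Suc (card Q)" using fQ card_image_le by simp
    finally show ?thesis .
  qed
  ultimately show ?thesis using sub by (meson card_mono finite_subset order_trans)
qed

lemma refine_card:
  assumes d: "dfa \<Sigma> Q F q0 \<delta>" and i: "inv \<Sigma> (dfa_lang \<Sigma> F q0 \<delta>) c"
    and st: "ids_step \<Sigma> (dfa_lang \<Sigma> F q0 \<delta>) c c'" and ph: "phase c \<noteq> Loop" "phase c' \<noteq> Loop"
  shows "card (cls c) < card (cls c')"
  using st
proof cases
  case (refine \<alpha> \<beta> b \<gamma>)
  define L where "L = dfa_lang \<Sigma> F q0 \<delta>"
  define v where "v = b # \<gamma>"
  define memb where "memb x = (case x of None \<Rightarrow> False | Some a \<Rightarrow> a \<in> TT c \<and> a @ v \<in> L)" for x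
  have c': "c' = refine_add L c v" using refine by (simp add: L_def v_def)
  have I: "PP c \<subseteq> TT c" "\<forall>a\<in>PP c. \<forall>b\<in>\<Sigma>. a@[b] \<in> TT c" "EE c None = {}"
     "\<And>x. EE c (Some x) = (if x \<in> TT c then {v\<in>set (vs c). x@v \<in> L} else {})"
    using i by (auto simp: inv_def L_def)
  have key: "\<And>\<alpha> \<beta>. \<alpha> \<in> Pp c \<Longrightarrow> \<beta> \<in> Pp c \<Longrightarrow> EE c \<alpha> = EE c \<beta> \<Longrightarrow>
      \<gamma> \<in> EE c (fx \<alpha> b) - EE c (fx \<beta> b) \<Longrightarrow> memb \<alpha> \<and> \<not> memb \<beta> \<and> v \<notin> set (vs c)"
  proof -
    fix \<alpha> \<beta> assume a: "\<alpha> \<in> Pp c" "\<beta> \<in> Pp c" "EE c \<alpha> = EE c \<beta>" "\<gamma> \<in> EE c (fx \<alpha> b) - EE c (fx \<beta> b)"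
    obtain a where aa: "\<alpha> = Some a" using a(4) I(3) by (cases \<alpha>) auto
    have aP: "a \<in> PP c" using a(1) aa by (auto simp: Pp_def)
    have g1: "\<gamma> \<in> set (vs c)" "a @ v \<in> L" using a(4) aa I(4)[of "a@[b]"] by (auto simp: v_def split: if_splits)
    have ma: "memb \<alpha>" using aa aP I(1) g1 by (auto simp: memb_def)
    have mb: "\<not> memb \<beta>"
    proof (cases \<beta>)
      case (Some c0)
      have "c0 \<in> PP c" using a(2) Some by (auto simp: Pp_def)
      then have "c0 @ [b] \<in> TT c" using I(2) \<open>b \<in> \<Sigma>\<close> by blast
      then have "c0 @ v \<notin> L" using a(4) Some I(4)[of "c0@[b]"] g1 by (auto simp: v_def)
      then show ?thesis using Some by (simp add: memb_def)
    qed (simp add: memb_def)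
    have "v \<notin> set (vs c)"
    proof
      assume vin: "v \<in> set (vs c)"
      then have "v \<in> EE c \<alpha>" using aa aP I(1) I(4)[of a] g1 by auto
      then have "v \<in> EE c \<beta>" using a(3) by simp
      then show False using mb I(3) I(4) by (cases \<beta>) (auto simp: memb_def split: if_splits)
    qed
    then show "memb \<alpha> \<and> \<not> memb \<beta> \<and> v \<notin> set (vs c)" using ma mb by simp
  qed
  have sd: "\<gamma> \<in> EE c (fx \<alpha> b) - EE c (fx \<beta> b) \<or> \<gamma> \<in> EE c (fx \<beta> b) - EE c (fx \<alpha> b)"
    using refine by (auto simp: symdiff_def)
  obtain x y where xy: "x \<in> Pp c" "y \<in> Pp c" "EE c x = EE c y" "memb x" "\<not> memb y" and vn: "v \<notin> set (vs c)"
  proof (cases "\<gamma> \<in> EE c (fx \<alpha> b) - EE c (fx \<beta> b)")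
    case True
    from key[OF refine(3) refine(4) refine(6) True] show ?thesis using that refine(3,4,6) by blast
  next
    case False
    then have F: "\<gamma> \<in> EE c (fx \<beta> b) - EE c (fx \<alpha> b)" using sd by blast
    from key[OF refine(4) refine(3) refine(6)[symmetric] F] show ?thesis using that refine(3,4,6) by metis
  qed
  have EE': "\<And>z. EE c' z = EE c z \<union> (if memb z then {v} else {})"
    by (case_tac z) (simp_all add: c' refine_add_def memb_def I(3))
  have vnot: "\<And>z. v \<notin> EE c z"
  proof -
    fix z show "v \<notin> EE c z"
      by (cases z) (simp_all add: I(3) I(4) vn)
  qed
  have Pp': "Pp c' = Pp c" using c' by (simp add: Pp_def refine_add_def)
  have dd: "\<And>z. EE c' z - {v} = EE c z" using EE' vnot by auto
  have img: "(\<lambda>X. X - {v}) ` cls c' = cls c"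
    unfolding cls_def Pp' image_image dd by simp
  have fin: "finite (cls c')"
    using cls_bound[OF d inv_step[OF i st]] by simp
  have ninj: "\<not> inj_on (\<lambda>X. X - {v}) (cls c')"
  proof
    assume "inj_on (\<lambda>X. X - {v}) (cls c')"
    moreover have "EE c' x \<in> cls c'" "EE c' y \<in> cls c'" using xy Pp' by (auto simp: cls_def)
    moreover have "EE c' x - {v} = EE c' y - {v}" using EE' vnot xy by auto
    ultimately have "EE c' x = EE c' y" by (meson inj_onD)
    moreover have "v \<in> EE c' x" using EE' xy(4) by simp
    moreover have "v \<notin> EE c' y" using EE' xy(5) vnot by simp
    ultimately show False by simp
  qed
  have cc: "card (cls c) = card ((\<lambda>X. X - {v}) ` cls c')" using img by simp
  have "card ((\<lambda>X. X - {v}) ` cls c') \<le> card (cls c')" by (rule card_image_le[OF fin])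
  moreover have "card ((\<lambda>X. X - {v}) ` cls c') \<noteq> card (cls c')"
    using ninj inj_on_iff_eq_card[OF fin] by blast
  ultimately show ?thesis using cc by simp
qed (use ph in \<open>auto simp: read_string_def\<close>)

definition mu :: "nat \<Rightarrow> 'a ids_state \<Rightarrow> nat" where
  "mu K c = length (rest c) * (K + 2) + (if phase c = Loop then 0 else K + 1 - card (cls c))"

lemma mu_dec:
  assumes d: "dfa \<Sigma> Q F q0 \<delta>" and i: "inv \<Sigma> (dfa_lang \<Sigma> F q0 \<delta>) c"
    and st: "ids_step \<Sigma> (dfa_lang \<Sigma> F q0 \<delta>) c c'"
  shows "mu (card Q + 2) c' < mu (card Q + 2) c"
proof -
  have b1: "card (cls c) \<le> Suc (card Q)" using cls_bound[OF d i] by simp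
  have b2: "card (cls c') \<le> Suc (card Q)" using cls_bound[OF d inv_step[OF i st]] by simp
  show ?thesis using st
  proof cases
    case (refine \<alpha> \<beta> b \<gamma>)
    have ph: "phase c' \<noteq> Loop" "rest c' = rest c" using refine by (auto simp: refine_add_def)
    have "card (cls c) < card (cls c')" using refine_card[OF d i st] refine ph by simp
    then show ?thesis using ph refine b2 by (simp add: mu_def)
  next
    case finish_init then show ?thesis using b1 by (simp add: mu_def)
  next
    case (finish_after \<alpha>) then show ?thesis using b1 by (simp add: mu_def)
  next
    case (read \<alpha> S')
    have "phase c' \<noteq> Loop" "rest c' = S'" using read by (auto simp: read_string_def)
    then show ?thesis using read by (simp add: mu_def)
  qed
qed

lemma terminal:
  assumes "\<forall>c'. \<not> ids_step \<Sigma> L c c'"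
  shows "phase c = Loop \<and> rest c = []"
proof -
  have "phase c = Loop"
  proof (rule ccontr)
    assume np: "phase c \<noteq> Loop"
    show False
    proof (cases "can_refine \<Sigma> c")
      case True
      then obtain \<alpha> \<beta> b where ab: "\<alpha>\<in>Pp c" "\<beta>\<in>Pp c" "b\<in>\<Sigma>" "EE c \<alpha> = EE c \<beta>"
        "EE c (fx \<alpha> b) \<noteq> EE c (fx \<beta> b)" unfolding can_refine_def by blast
      then obtain \<gamma> where "\<gamma> \<in> symdiff (EE c (fx \<alpha> b)) (EE c (fx \<beta> b))"
        unfolding symdiff_def by blast
      then show False using ids_step.refine[OF np ab] assms by blast
    next
      case False
      then show False using np assms ids_step.finish_init ids_step.finish_after
        by (cases "phase c") blast+
    qed
  qed
  moreover have "rest c = []"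
    using assms ids_step.read[OF \<open>phase c = Loop\<close>] by (cases "rest c") blast+
  ultimately show ?thesis by simp
qed

lemma kk_step: "ids_step \<Sigma> L c c' \<Longrightarrow> kk c' + length (rest c') = kk c + length (rest c)"
  by (induction rule: ids_step.induct) (auto simp: refine_add_def read_string_def)

theorem mainTheorem4:
  fixes \<Sigma> :: "'a set" and Q F :: "'q set" and q0 :: 'q and \<delta> :: "'q \<Rightarrow> 'a \<Rightarrow> 'q"
    and S :: "'a list list"
  assumes "dfa \<Sigma> Q F q0 \<delta>"
    and "S \<noteq> []"
    and "\<forall>s\<in>set S. set s \<subseteq> \<Sigma>"
  shows "\<not> (\<exists>g. g 0 = ids_init \<Sigma> (dfa_lang \<Sigma> F q0 \<delta>) S \<and>
              (\<forall>n. ids_step \<Sigma> (dfa_lang \<Sigma> F q0 \<delta>) (g n) (g (Suc n))))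
     \<and> (\<forall>c. (ids_step \<Sigma> (dfa_lang \<Sigma> F q0 \<delta>))\<^sup>*\<^sup>* (ids_init \<Sigma> (dfa_lang \<Sigma> F q0 \<delta>) S) c
             \<and> (\<forall>c'. \<not> ids_step \<Sigma> (dfa_lang \<Sigma> F q0 \<delta>) c c')
           \<longrightarrow> phase c = Loop \<and> rest c = [] \<and> kk c = length S)"
proof (rule conjI)
  let ?L = "dfa_lang \<Sigma> F q0 \<delta>"
  show "\<not> (\<exists>g. g 0 = ids_init \<Sigma> ?L S \<and> (\<forall>n. ids_step \<Sigma> ?L (g n) (g (Suc n))))"
  proof
    assume "\<exists>g. g 0 = ids_init \<Sigma> ?L S \<and> (\<forall>n. ids_step \<Sigma> ?L (g n) (g (Suc n)))"
    then obtain g where g: "g 0 = ids_init \<Sigma> ?L S" "\<And>n. ids_step \<Sigma> ?L (g n) (g (Suc n))" by blast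
    have I: "inv \<Sigma> ?L (g n)" for n
    proof (induction n)
      case 0 then show ?case using g(1) inv_init by metis
    next
      case (Suc n) then show ?case using g(2) inv_step by metis
    qed
    have "mu (card Q + 2) (g n) + n \<le> mu (card Q + 2) (g 0)" for n
    proof (induction n)
      case (Suc n)
      have "mu (card Q + 2) (g (Suc n)) < mu (card Q + 2) (g n)"
        using mu_dec[OF assms(1) I g(2)] by simp
      then show ?case using Suc by simp
    qed simp
    from this[of "Suc (mu (card Q + 2) (g 0))"] show False by simp
  qed
next
  let ?L = "dfa_lang \<Sigma> F q0 \<delta>"
  show "\<forall>c. (ids_step \<Sigma> ?L)\<^sup>*\<^sup>* (ids_init \<Sigma> ?L S) c \<and> (\<forall>c'. \<not> ids_step \<Sigma> ?L c c')
           \<longrightarrow> phase c = Loop \<and> rest c = [] \<and> kk c = length S"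
  proof (rule allI, rule impI)
  fix c
  assume a: "(ids_step \<Sigma> ?L)\<^sup>*\<^sup>* (ids_init \<Sigma> ?L S) c \<and> (\<forall>c'. \<not> ids_step \<Sigma> ?L c c')"
  have "kk c + length (rest c) = length S"
    using a[THEN conjunct1]
  proof (induction rule: rtranclp_induct)
    case base then show ?case by (simp add: ids_init_def)
  next
    case (step y z) then show ?case using kk_step[OF step(2)] by simp
  qed
  then show "phase c = Loop \<and> rest c = [] \<and> kk c = length S"
    using terminal[of \<Sigma> ?L c] a by simp
  qed
qed

end
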